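(* Let $k\ge0$, $K=k+12$, $M=K/\gcd(K,27720)$. Let $d=(d_0;d_1,d_2,d_3,d_4)$ be integers with $d_0+d_1+2d_2+d_3+d_4=k+6$, and suppose $\pi d=Jd$ for some transposition $\pi$ of the labels $\{1,3,4\}$ and some $D_4$ simple current $J\in\{\mathrm{id},J_\nu,J_s,J_\nu J_s\}$. Then $F(d)\equiv0\pmod M$ (i.e. $\dim_{F_4}(b')\equiv0\pmod M$ for the corresponding $F_4^{(1)}$-weight $b'$).
   Context: With $a_i=d_i+1$, $F(d)=\frac{1}{2^{15}3^7 5^4 7^2 11}\,a_1a_2a_3a_4(a_1+a_2)(a_1+a_3)(a_1+a_4)(a_2+a_3)(a_2+a_4)(a_3+a_4)(a_1-a_3)(a_1-a_4)(a_4-a_3)(a_1+a_2+a_3)(a_1+a_2+a_4)(a_2+a_3+a_4)(a_1+a_2+a_3+a_4)(a_1+2a_2+a_3)(a_1+2a_2+a_4)(2a_2+a_3+a_4)(a_1+2a_2+a_3+a_4)(2a_1+2a_2+a_3+a_4)(a_1+2a_2+2a_3+a_4)(a_1+2a_2+a_3+2a_4)$ (the formal $F_4$ Weyl dimension, via $\iota'(c)=(c_0;c_2+c_3+c_4+2,c_1,c_2,c_2+c_3+1)$ for $F_4^{(1)}$-weights $c$ of level $k+3$, i.e. $c_0+2c_1+3c_2+2c_3+c_4=k+3$). A permutation $\pi$ of $\{1,3,4\}$ acts on $d$ by permuting the entries $d_1,d_3,d_4$ (fixing $d_0,d_2$). $J_\nu d=(d_1;d_0,d_2,d_4,d_3)$,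 $J_sd=(d_4;d_3,d_2,d_1,d_0)$. *)

theory Defs
  imports Complex_Main "HOL-Combinatorics.Transposition"
begin

type_synonym dvec = "int \<times> int \<times> int \<times> int \<times> int"

definition dcomp :: "dvec \<Rightarrow> nat \<Rightarrow> int" where
  "dcomp d i = (case d of (d0, d1, d2, d3, d4) \<Rightarrow>
     (if i = 0 then d0 else if i = 1 then d1 else if i = 2 then d2
      else if i = 3 then d3 else d4))"

definition perm_act :: "(nat \<Rightarrow> nat) \<Rightarrow> dvec \<Rightarrow> dvec" where
  "perm_act p d = (let q = inv p in
     (dcomp d (q 0), dcomp d (q 1), dcomp d (q 2), dcomp d (q 3), dcomp d (q 4)))"

definition J_nu :: "dvec \<Rightarrow> dvec" where
  "J_nu d = (case d of (d0, d1, d2, d3, d4) \<Rightarrow> (d1, d0, d2, d4, d3))"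

definition J_s :: "dvec \<Rightarrow> dvec" where
  "J_s d = (case d of (d0, d1, d2, d3, d4) \<Rightarrow> (d4, d3, d2, d1, d0))"

text \<open>The formal F4 Weyl dimension, with a_i = d_i + 1.\<close>
definition F :: "dvec \<Rightarrow> rat" where
  "F d = (case d of (d0, d1, d2, d3, d4) \<Rightarrow>
     (let a1 = of_int (d1 + 1) :: rat; a2 = of_int (d2 + 1); a3 = of_int (d3 + 1);
          a4 = of_int (d4 + 1) in
      (a1*a2*a3*a4*(a1+a2)*(a1+a3)*(a1+a4)*(a2+a3)*(a2+a4)*(a3+a4)
       *(a1-a3)*(a1-a4)*(a4-a3)*(a1+a2+a3)*(a1+a2+a4)*(a2+a3+a4)*(a1+a2+a3+a4)
       *(a1+2*a2+a3)*(a1+2*a2+a4)*(2*a2+a3+a4)*(a1+2*a2+a3+a4)*(2*a1+2*a2+a3+a4)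
       *(a1+2*a2+2*a3+a4)*(a1+2*a2+a3+2*a4))
      / (2^15 * 3^7 * 5^4 * 7^2 * 11)))"

end

theory Submission
  imports Defs
begin


type_synonym form = "int list \<times> int"

definition ev :: "form \<Rightarrow> int list \<Rightarrow> int" where
  "ev f x = sum_list (map (\<lambda>(u,v). u*v) (zip (fst f) x)) + snd f"

fun res :: "int \<Rightarrow> nat \<Rightarrow> int list list" where
  "res p 0 = [[]]"
| "res p (Suc n) = concat (map (\<lambda>c. map (\<lambda>r. c # r) (res p n)) [0..p-1])"

definition step :: "int \<Rightarrow> int list \<Rightarrow> form \<Rightarrow> form option" where
  "step p c f = (let v = ev f c in if v mod p = 0 then Some (fst f, v div p) else None)"

fun chk :: "nat \<Rightarrow> int \<Rightarrow> nat \<Rightarrow> form list \<Rightarrow> int \<Rightarrow> bool" where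
  "chk 0 p n fs need = (need \<le> 0)"
| "chk (Suc d) p n fs need = (need \<le> 0 \<or> list_all (\<lambda>c. let nf = List.map_filter (step p c) fs in
      chk d p n nf (need - int (length nf))) (res p n))"

lemma res_mem: "length x = n \<Longrightarrow> (\<forall>xi\<in>set x. 0 \<le> xi \<and> xi < p) \<Longrightarrow> x \<in> set (res p n)"
proof (induction n arbitrary: x)
  case 0 then show ?case by simp
next
  case (Suc n)
  obtain c r where x: "x = c # r" using Suc.prems(1) by (cases x) auto
  have r: "r \<in> set (res p n)" using Suc.IH[of r] Suc.prems x by simp
  have c: "c \<in> set [0..p-1]" using Suc.prems x by simp
  have "x \<in> (\<Union>c\<in>set [0..p-1]. set (map (\<lambda>r. c # r) (res p n)))"
    by (rule UN_I[OF c]) (simp add: x r)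
  then show ?case by simp
qed

lemma ev_Cons: "ev (u # cs, k) (v # z) = u * v + ev (cs, k) z" by (simp add: ev_def)

lemma ev_split:
  assumes "length (fst f) = length x" "length y = length x" "length c = length x"
    and "\<forall>i<length x. x!i = c!i + p * y!i"
  shows "ev f x = ev f c + p * ev (fst f, 0) y"
  using assms
proof (induction x arbitrary: f c y)
  case Nil then show ?case by (simp add: ev_def)
next
  case (Cons a x)
  obtain cs k where f: "f = (cs,k)" by (cases f)
  obtain u cs' where cs: "cs = u # cs'" using Cons.prems f by (cases cs) auto
  obtain c0 c' where c: "c = c0 # c'" using Cons.prems by (cases c) auto
  obtain y0 y' where y: "y = y0 # y'" using Cons.prems by (cases y) auto
  have h0: "a = c0 + p * y0" using Cons.prems(4)[rule_format, of 0] c y by simp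
  have hi: "\<forall>i<length x. x!i = c'!i + p * y'!i"
    using Cons.prems(4) c y by (metis Suc_less_eq length_Cons nth_Cons_Suc)
  have IH: "ev (cs',k) x = ev (cs',k) c' + p * ev (cs', 0) y'"
    using Cons.IH[of "(cs',k)" y' c'] Cons.prems f cs c y hi by simp
  have ec: "ev (u # cs', k) (v # z) = u * v + ev (cs', k) z" for v z k by (simp add: ev_def)
  have "ev f (a # x) = u * a + ev (cs', k) x" using f cs ec by simp
  also have "... = (u * c0 + ev (cs', k) c') + p * (u * y0 + ev (cs', 0) y')"
    unfolding IH h0 by (simp add: algebra_simps)
  finally show ?case using f cs c y ec by simp
qed

lemma prod_split:
  assumes "p > 1" "\<forall>f\<in>set fs. length (fst f) = length x" "length y = length x" "length c = length x"
    and "\<forall>i<length x. x!i = c!i + p * y!i"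
  shows "\<exists>R. prod_list (map (\<lambda>f. ev f x) fs) =
     p ^ length (List.map_filter (step p c) fs) * prod_list (map (\<lambda>f. ev f y) (List.map_filter (step p c) fs)) * R"
  using assms(2)
proof (induction fs)
  case Nil then show ?case by (simp add: List.map_filter_simps)
next
  case (Cons f fs)
  have "\<forall>f\<in>set fs. length (fst f) = length x" using Cons.prems by simp
  then obtain R where R: "prod_list (map (\<lambda>f. ev f x) fs) =
     p ^ length (List.map_filter (step p c) fs) * prod_list (map (\<lambda>f. ev f y) (List.map_filter (step p c) fs)) * R"
    using Cons.IH by blast
  have lf: "length (fst f) = length x" using Cons.prems by simp
  have sp: "ev f x = ev f c + p * ev (fst f, 0) y"
    by (rule ev_split[OF lf assms(3,4,5)])
  show ?case
  proof (cases "ev f c mod p = 0")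
    case True
    have e1: "ev (fst f, v) y = ev (fst f, 0) y + v" for v by (simp add: ev_def)
    have e2: "ev f c = p * (ev f c div p)" using True mult_div_mod_eq[of p "ev f c"] by simp
    have "ev f x = p * (ev f c div p) + p * ev (fst f, 0) y" using sp e2 by metis
    also have "... = p * ev (fst f, ev f c div p) y" by (simp add: ev_def algebra_simps)
    finally have "ev f x = p * ev (fst f, ev f c div p) y" .
    moreover have st: "step p c f = Some (fst f, ev f c div p)" using True by (simp add: step_def)
    ultimately have "prod_list (map (\<lambda>f. ev f x) (f # fs)) = p ^ length (List.map_filter (step p c) (f # fs)) * prod_list (map (\<lambda>f. ev f y) (List.map_filter (step p c) (f # fs))) * R"
      using R by (simp add: List.map_filter_simps st mult_ac)
    then show ?thesis by blast
  next
    case False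
    have st: "step p c f = None" using False by (simp add: step_def)
    have "prod_list (map (\<lambda>f. ev f x) (f # fs)) = p ^ length (List.map_filter (step p c) (f # fs)) * prod_list (map (\<lambda>f. ev f y) (List.map_filter (step p c) (f # fs))) * (ev f x * R)"
      using R by (simp add: List.map_filter_simps st mult_ac)
    then show ?thesis by blast
  qed
qed

lemma chk_sound:
  "chk d p n fs need \<Longrightarrow> p > 1 \<Longrightarrow> (\<forall>f\<in>set fs. length (fst f) = n) \<Longrightarrow> length x = n \<Longrightarrow>
   p ^ nat need dvd prod_list (map (\<lambda>f. ev f x) fs)"
proof (induction d arbitrary: fs need x)
  case 0 then show ?case by simp
next
  case (Suc d)
  show ?case
  proof (cases "need \<le> 0")
    case True then show ?thesis by simp
  next
    case False
    define c where "c = map (\<lambda>xi. xi mod p) x"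
    define y where "y = map (\<lambda>xi. xi div p) x"
    have cres: "c \<in> set (res p n)"
      using Suc.prems by (intro res_mem) (auto simp: c_def)
    define nf where "nf = List.map_filter (step p c) fs"
    have ch: "chk d p n nf (need - int (length nf))"
      using Suc.prems(1) False cres by (auto simp: nf_def list_all_iff Let_def)
    have nfl: "\<forall>f\<in>set nf. length (fst f) = n"
      using Suc.prems(3) by (auto simp: nf_def List.map_filter_def step_def Let_def split: if_splits)
    have d1: "p ^ nat (need - int (length nf)) dvd prod_list (map (\<lambda>f. ev f y) nf)"
      using Suc.IH[OF ch Suc.prems(2) nfl] Suc.prems(4) by (simp add: y_def)
    have xs: "\<forall>i<length x. x!i = c!i + p * y!i"
    proof (intro allI impI)
      fix i assume "i < length x"
      then show "x!i = c!i + p * y!i" using mod_mult_div_eq[of "x!i" p] by (simp add: c_def y_def algebra_simps)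
    qed
    have ly: "length y = length x" "length c = length x" by (simp_all add: c_def y_def)
    have fl: "\<forall>f\<in>set fs. length (fst f) = length x" using Suc.prems(3,4) by simp
    obtain R where R: "prod_list (map (\<lambda>f. ev f x) fs) = p ^ length nf * prod_list (map (\<lambda>f. ev f y) nf) * R"
      using prod_split[OF Suc.prems(2) fl ly xs] unfolding nf_def by blast
    have "p ^ nat need dvd p ^ length nf * p ^ nat (need - int (length nf))"
      by (simp add: power_add[symmetric] le_imp_power_dvd)
    also have "... dvd p ^ length nf * prod_list (map (\<lambda>f. ev f y) nf)"
      using d1 by (simp add: mult_dvd_mono)
    finally show ?thesis using R by simp
  qed
qed



lemma dvd_prod_bez:
  fixes a b x u v :: int
  assumes "a dvd x" "b dvd x" "u * a + v * b = 1"
  shows "a * b dvd x"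
proof -
  have "x = u * (a * x) + v * (b * x)" using assms(3)
    by (metis distrib_right mult.assoc mult_1)
  moreover have "a * b dvd a * x" using assms(2) by simp
  moreover have "a * b dvd b * x" using assms(1) by (simp add: mult.commute[of a b])
  ultimately show ?thesis by (metis dvd_add dvd_mult)
qed

fun proj :: "int \<Rightarrow> nat \<Rightarrow> int list list" where
  "proj p 0 = []"
| "proj p (Suc n) = map ((#) 1) (res p n) @ map ((#) 0) (proj p n)"

fun enough :: "int \<Rightarrow> int list \<Rightarrow> nat \<Rightarrow> form list \<Rightarrow> bool" where
  "enough p c 0 fs = True"
| "enough p c (Suc m) [] = False"
| "enough p c (Suc m) (f # fs) = (if ev f c mod p = 0 then enough p c m fs else enough p c (Suc m) fs)"

definition inv_ok :: "int \<Rightarrow> bool" where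
  "inv_ok p = list_all (\<lambda>r. list_ex (\<lambda>l. (l * r) mod p = 1) [1..p-1]) [1..p-1]"

lemma enough_le: "enough p c m fs \<Longrightarrow> m \<le> length (filter (\<lambda>f. ev f c mod p = 0) fs)"
  by (induction p c m fs rule: enough.induct) (auto split: if_splits)

lemma count_dvd: "p ^ length (filter (\<lambda>f. ev f x mod p = 0) fs) dvd prod_list (map (\<lambda>f. ev f x) fs)"
proof (induction fs)
  case Nil then show ?case by simp
next
  case (Cons f fs)
  show ?case
  proof (cases "ev f x mod p = 0")
    case True
    then have "p dvd ev f x" by (simp add: dvd_eq_mod_eq_0)
    then show ?thesis using Cons True by (simp add: mult_dvd_mono)
  next
    case False
    then show ?thesis using Cons by (simp add: dvd_mult)
  qed
qed

lemma ev_Nil1: "ev ([], k) x = k" by (simp add: ev_def)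
lemma ev_Nil2: "ev (cs, k) [] = k" by (simp add: ev_def)

lemma ev_map_mod:
  assumes "\<forall>v\<in>set x. g v mod p = h v mod p"
  shows "ev f (map g x) mod p = ev f (map h x) mod p"
  using assms
proof (induction x arbitrary: f)
  case Nil then show ?case by simp
next
  case (Cons a x)
  obtain cs k where f: "f = (cs, k)" by (cases f)
  show ?case
  proof (cases cs)
    case Nil then show ?thesis using f by (simp add: ev_Nil1)
  next
    case (Cons u cs')
    have IH: "ev (cs', k) (map g x) mod p = ev (cs', k) (map h x) mod p"
      using Cons.IH Cons.prems by simp
    have ga: "g a mod p = h a mod p" using Cons.prems by simp
    have "(u * g a + ev (cs', k) (map g x)) mod p = (u * h a + ev (cs', k) (map h x)) mod p"
      by (rule mod_add_cong[OF mod_mult_cong[OF refl ga] IH])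
    then show ?thesis using f Cons by (simp add: ev_Cons)
  qed
qed

lemma ev_scale: "ev (cs, k) (map (\<lambda>v. l * v) x) = l * ev (cs, 0) x + k"
proof (induction x arbitrary: cs)
  case Nil then show ?case by (simp add: ev_Nil2)
next
  case (Cons a x)
  then show ?case by (cases cs) (simp_all add: ev_Nil1 ev_Cons algebra_simps)
qed

lemma inv_okD:
  assumes "inv_ok p" "p > 1" "a mod p \<noteq> 0"
  shows "\<exists>l. (l * a) mod p = 1"
proof -
  have "0 \<le> a mod p" "a mod p < p" using assms(2) by simp_all
  then have r: "a mod p \<in> set [1..p-1]" using assms(3) by simp
  then obtain l where "(l * (a mod p)) mod p = 1"
    using assms(1) unfolding inv_ok_def list_all_iff list_ex_iff by blast
  then show ?thesis by (metis mod_mult_right_eq)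
qed

lemma proj_exists:
  assumes "inv_ok p" "p > 1"
  shows "length x = n \<Longrightarrow> (\<exists>v\<in>set x. v mod p \<noteq> 0) \<Longrightarrow>
    \<exists>l l'. (l' * l) mod p = 1 \<and> map (\<lambda>v. (l * v) mod p) x \<in> set (proj p n)"
proof (induction x arbitrary: n)
  case Nil then show ?case by simp
next
  case (Cons a r)
  then obtain n' where n: "n = Suc n'" by (cases n) auto
  show ?case
  proof (cases "a mod p = 0")
    case True
    then have "\<exists>v\<in>set r. v mod p \<noteq> 0" using Cons.prems by auto
    then obtain l l' where ll: "(l' * l) mod p = 1" "map (\<lambda>v. (l * v) mod p) r \<in> set (proj p n')"
      using Cons.IH Cons.prems n by auto
    have "(l * a) mod p = 0" using True by (metis mod_mult_right_eq mult_zero_right mod_0)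
    then show ?thesis using ll n by (rule_tac x=l in exI, rule_tac x=l' in exI) simp
  next
    case False
    then obtain l where l: "(l * a) mod p = 1" using inv_okD[OF assms] by blast
    have "map (\<lambda>v. (l * v) mod p) r \<in> set (res p n')"
      using Cons.prems n assms(2) by (intro res_mem) auto
    then show ?thesis using l n by (rule_tac x=l in exI, rule_tac x=a in exI) (simp add: mult.commute)
  qed
qed

lemma unit_mod:
  fixes l l' e p :: int
  assumes "(l' * l) mod p = 1"
  shows "(l * e) mod p = 0 \<longleftrightarrow> e mod p = 0"
proof
  assume h: "(l * e) mod p = 0"
  have "(l' * l * e) mod p = (1 * e) mod p"
    using assms by (metis mod_mult_cong mod_mod_trivial)
  moreover have "(l' * l * e) mod p = 0" using h
    by (metis mod_mult_right_eq mult.assoc mult_zero_right mod_0)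
  ultimately show "e mod p = 0" by simp
next
  assume "e mod p = 0"
  then show "(l * e) mod p = 0" by (metis mod_mult_right_eq mult_zero_right mod_0)
qed

lemma proj_sound:
  assumes "inv_ok p" "p > 1" "list_all (\<lambda>c. enough p c m fs) (proj p n)"
    "\<forall>f\<in>set fs. snd f = 0" "length x = n" "m \<le> length fs"
  shows "m \<le> length (filter (\<lambda>f. ev f x mod p = 0) fs)"
proof (cases "\<forall>v\<in>set x. v mod p = 0")
  case True
  have "ev f x mod p = 0" if "f \<in> set fs" for f
  proof -
    obtain cs k where f: "f = (cs, k)" by (cases f)
    have k: "k = 0" using assms(4) that f by auto
    have "ev f (map (\<lambda>v. v) x) mod p = ev f (map (\<lambda>v. 0 * v) x) mod p"
      using True by (intro ev_map_mod) auto
    then show ?thesis using f k by (simp only: ev_scale map_ident) simp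
  qed
  then have "filter (\<lambda>f. ev f x mod p = 0) fs = fs" by simp
  then show ?thesis using assms(6) by simp
next
  case False
  then obtain l l' where ll: "(l' * l) mod p = 1" and c: "map (\<lambda>v. (l * v) mod p) x \<in> set (proj p n)"
    using proj_exists[OF assms(1,2) assms(5)] by blast
  have en: "enough p (map (\<lambda>v. (l * v) mod p) x) m fs" using assms(3) c by (simp add: list_all_iff)
  have eq: "(ev f (map (\<lambda>v. (l * v) mod p) x) mod p = 0) = (ev f x mod p = 0)" if "f \<in> set fs" for f
  proof -
    obtain cs k where f: "f = (cs, k)" by (cases f)
    have k: "k = 0" using assms(4) that f by auto
    have "ev f (map (\<lambda>v. (l * v) mod p) x) mod p = ev f (map (\<lambda>v. l * v) x) mod p"
      by (intro ev_map_mod) simp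
    also have "... = (l * ev f x) mod p" using f k by (simp add: ev_scale)
    finally show ?thesis using unit_mod[OF ll] by simp
  qed
  have "filter (\<lambda>f. ev f (map (\<lambda>v. (l * v) mod p) x) mod p = 0) fs = filter (\<lambda>f. ev f x mod p = 0) fs"
    using eq by (intro filter_cong) auto
  then show ?thesis using enough_le[OF en] by simp
qed

lemma filter_remove1_ge: "length (filter P xs) - 1 \<le> length (filter P (remove1 g xs))"
  by (induction xs) auto

definition forms24 :: "form list" where
  "forms24 = map (\<lambda>c. (c, 0)) [[1,0,0,0],[0,1,0,0],[0,0,1,0],[0,0,0,1],[1,1,0,0],[1,0,1,0],[1,0,0,1],[0,1,1,0],[0,1,0,1],[0,0,1,1],[1,0,-1,0],[1,0,0,-1],[0,0,-1,1],[1,1,1,0],[1,1,0,1],[0,1,1,1],[1,1,1,1],[1,2,1,0],[1,2,0,1],[0,2,1,1],[1,2,1,1],[2,2,1,1],[1,2,2,1],[1,2,1,2]]"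

definition K1 :: form where "K1 = ([2,2,1,1], 0)"
definition K2 :: form where "K2 = ([1,2,1,2], 0)"
definition K3 :: form where "K3 = ([1,2,2,1], 0)"

lemma forms24_len: "\<forall>f\<in>set forms24. length (fst f) = 4" by (simp add: forms24_def)
lemma forms24_snd: "\<forall>f\<in>set forms24. snd f = 0" by (simp add: forms24_def)
lemma forms24_rem_len: "\<forall>f\<in>set (remove1 g forms24). length (fst f) = 4"
  using forms24_len by (meson notin_set_remove1)

lemma c2A: "chk 4 2 4 forms24 15" by code_simp
lemma c2B1: "chk 4 2 4 (remove1 K1 forms24) 12" by code_simp
lemma c2B2: "chk 4 2 4 (remove1 K2 forms24) 12" by code_simp
lemma c2B3: "chk 4 2 4 (remove1 K3 forms24) 12" by code_simp
lemma c3A: "chk 4 3 4 forms24 7" by code_simp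
lemma c3B1: "chk 4 3 4 (remove1 K1 forms24) 5" by code_simp
lemma c3B2: "chk 4 3 4 (remove1 K2 forms24) 5" by code_simp
lemma c3B3: "chk 4 3 4 (remove1 K3 forms24) 5" by code_simp
lemma i5: "inv_ok 5" by code_simp
lemma i7: "inv_ok 7" by code_simp
lemma i11: "inv_ok 11" by code_simp
lemma c5: "list_all (\<lambda>c. enough 5 c 4 forms24) (proj 5 4)" by code_simp
lemma c7: "list_all (\<lambda>c. enough 7 c 2 forms24) (proj 7 4)" by code_simp
lemma c11: "list_all (\<lambda>c. enough 11 c 1 forms24) (proj 11 4)" by code_simp


lemma prod_list_map_remove1':
  fixes f :: "'a \<Rightarrow> int"
  shows "x \<in> set xs \<Longrightarrow> prod_list (map f xs) = f x * prod_list (map f (remove1 x xs))"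
  by (induct xs) (auto simp: mult.left_commute)

lemma pp_proj:
  assumes "inv_ok p" "p > 1" "list_all (\<lambda>c. enough p c m forms24) (proj p 4)" "length x = 4" "m \<le> 24"
  shows "p ^ m dvd prod_list (map (\<lambda>f. ev f x) forms24)"
    "p ^ (m - 1) dvd prod_list (map (\<lambda>f. ev f x) (remove1 g forms24))"
proof -
  have l: "length forms24 = 24" by (simp add: forms24_def)
  have c: "m \<le> length (filter (\<lambda>f. ev f x mod p = 0) forms24)"
    using proj_sound[OF assms(1,2,3) forms24_snd assms(4)] assms(5) l by simp
  have "p ^ m dvd p ^ length (filter (\<lambda>f. ev f x mod p = 0) forms24)"
    using c by (rule le_imp_power_dvd)
  then show "p ^ m dvd prod_list (map (\<lambda>f. ev f x) forms24)"
    using count_dvd dvd_trans by blast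
  have c2: "m - 1 \<le> length (filter (\<lambda>f. ev f x mod p = 0) (remove1 g forms24))"
    using c filter_remove1_ge[of "\<lambda>f. ev f x mod p = 0" forms24 g] by linarith
  have "p ^ (m - 1) dvd p ^ length (filter (\<lambda>f. ev f x mod p = 0) (remove1 g forms24))"
    using c2 by (rule le_imp_power_dvd)
  then show "p ^ (m - 1) dvd prod_list (map (\<lambda>f. ev f x) (remove1 g forms24))"
    using count_dvd dvd_trans by blast
qed

lemma pp_chk:
  assumes "chk d p 4 fs need" "p > 1" "\<forall>f\<in>set fs. length (fst f) = 4" "length x = 4"
  shows "p ^ nat need dvd prod_list (map (\<lambda>f. ev f x) fs)"
  using chk_sound[OF assms] .

lemma divA:
  assumes "length x = 4"
  shows "(2^15*3^7*5^4*7^2*11::int) dvd prod_list (map (\<lambda>f. ev f x) forms24)"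
proof -
  have h2: "(2::int)^15 dvd prod_list (map (\<lambda>f. ev f x) forms24)"
    using pp_chk[OF c2A _ forms24_len assms] by simp
  have h3: "(3::int)^7 dvd prod_list (map (\<lambda>f. ev f x) forms24)"
    using pp_chk[OF c3A _ forms24_len assms] by simp
  have h5: "(5::int)^4 dvd prod_list (map (\<lambda>f. ev f x) forms24)"
    using pp_proj(1)[OF i5 _ c5 assms] by simp
  have h7: "(7::int)^2 dvd prod_list (map (\<lambda>f. ev f x) forms24)"
    using pp_proj(1)[OF i7 _ c7 assms] by simp
  have h11: "(11::int)^1 dvd prod_list (map (\<lambda>f. ev f x) forms24)"
    using pp_proj(1)[OF i11 _ c11 assms] by simp
  have a1: "(2::int)^15 * 3^7 dvd prod_list (map (\<lambda>f. ev f x) forms24)"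
    by (rule dvd_prod_bez[OF h2 h3, of "-532" 7971]) simp
  have a2: "(2::int)^15 * 3^7 * 5^4 dvd prod_list (map (\<lambda>f. ev f x) forms24)"
    by (rule dvd_prod_bez[OF a1 h5, of "-14" 1605265]) simp
  have a3: "(2::int)^15 * 3^7 * 5^4 * 7^2 dvd prod_list (map (\<lambda>f. ev f x) forms24)"
    by (rule dvd_prod_bez[OF a2 h7, of 13 "-11882997551"]) simp
  have a4: "(2::int)^15 * 3^7 * 5^4 * 7^2 * 11^1 dvd prod_list (map (\<lambda>f. ev f x) forms24)"
    by (rule dvd_prod_bez[OF a3 h11, of "-5" 997590109091]) simp
  then show ?thesis by simp
qed

lemma divB:
  assumes "length x = 4" "g \<in> {K1, K2, K3}"
  shows "(2^12*3^5*5^3*7::int) dvd prod_list (map (\<lambda>f. ev f x) (remove1 g forms24))"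
proof -
  have h2: "(2::int)^12 dvd prod_list (map (\<lambda>f. ev f x) (remove1 g forms24))"
    using assms(2) pp_chk[OF c2B1 _ forms24_rem_len assms(1)] pp_chk[OF c2B2 _ forms24_rem_len assms(1)]
      pp_chk[OF c2B3 _ forms24_rem_len assms(1)] by auto
  have h3: "(3::int)^5 dvd prod_list (map (\<lambda>f. ev f x) (remove1 g forms24))"
    using assms(2) pp_chk[OF c3B1 _ forms24_rem_len assms(1)] pp_chk[OF c3B2 _ forms24_rem_len assms(1)]
      pp_chk[OF c3B3 _ forms24_rem_len assms(1)] by auto
  have h5: "(5::int)^3 dvd prod_list (map (\<lambda>f. ev f x) (remove1 g forms24))"
    using pp_proj(2)[OF i5 _ c5 assms(1), of g] by simp
  have h7: "(7::int)^1 dvd prod_list (map (\<lambda>f. ev f x) (remove1 g forms24))"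
    using pp_proj(2)[OF i7 _ c7 assms(1), of g] by simp
  have a1: "(2::int)^12 * 3^5 dvd prod_list (map (\<lambda>f. ev f x) (remove1 g forms24))"
    by (rule dvd_prod_bez[OF h2 h3, of 118 "-1989"]) simp
  have a2: "(2::int)^12 * 3^5 * 5^3 dvd prod_list (map (\<lambda>f. ev f x) (remove1 g forms24))"
    by (rule dvd_prod_bez[OF a1 h5, of "-8" 63701]) simp
  have a3: "(2::int)^12 * 3^5 * 5^3 * 7^1 dvd prod_list (map (\<lambda>f. ev f x) (remove1 g forms24))"
    by (rule dvd_prod_bez[OF a2 h7, of "-3" 53321143]) simp
  then show ?thesis by simp
qed

lemma core:
  fixes K R :: int
  assumes K: "0 < K" and A: "(2^15*3^7*5^4*7^2*11) dvd K * R" and B: "(2^12*3^5*5^3*7) dvd R"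
  shows "\<exists>z. (of_int (K * R) / (2^15*3^7*5^4*7^2*11) :: rat) = of_int ((K div gcd K 27720) * z)"
proof -
  define g where "g = gcd K 27720"
  have NN: "(2^15*3^7*5^4*7^2*11::int) = 27720 * (2^12*3^5*5^3*7)" by simp
  have "(2^15*3^7*5^4*7^2*11::int) dvd 27720 * R" unfolding NN using B by (rule mult_dvd_mono[OF dvd_refl])
  then have "(2^15*3^7*5^4*7^2*11::int) dvd gcd (R * K) (R * 27720)" using A by (simp add: mult.commute)
  also have "gcd (R * K) (R * 27720) = \<bar>R\<bar> * g" unfolding g_def by (rule gcd_mult_distrib_int[symmetric])
  also have "\<bar>R\<bar> * g = \<bar>R * g\<bar>" unfolding g_def by (simp add: abs_mult)
  finally have "(2^15*3^7*5^4*7^2*11::int) dvd R * g" by (simp only: dvd_abs_iff)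
  then obtain z where z: "R * g = (2^15*3^7*5^4*7^2*11) * z" by (elim dvdE)
  have gK: "K = g * (K div g)" unfolding g_def by simp
  have "K * R = (K div g) * (R * g)" by (subst gK) (simp add: ac_simps)
  also have "... = (K div g) * z * (2^15*3^7*5^4*7^2*11)" using z by simp
  finally have "(of_int (K * R) :: rat) = of_int ((K div g) * z) * (2^15*3^7*5^4*7^2*11)"
    by simp
  then show ?thesis unfolding g_def[symmetric] by (intro exI[of _ z]) simp
qed

lemma list24: "map (\<lambda>f. ev f [a1,a2,a3,a4]) forms24 = [a1, a2, a3, a4, a1+a2, a1+a3, a1+a4, a2+a3, a2+a4, a3+a4,
   a1-a3, a1-a4, a4-a3, a1+a2+a3, a1+a2+a4, a2+a3+a4, a1+a2+a3+a4, a1+2*a2+a3, a1+2*a2+a4, 2*a2+a3+a4,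
   a1+2*a2+a3+a4, 2*a1+2*a2+a3+a4, a1+2*a2+2*a3+a4, a1+2*a2+a3+2*a4]"
  by (simp add: forms24_def ev_def algebra_simps)

lemma F_eq: "F (d0, d1, d2, d3, d4) =
   of_int (prod_list (map (\<lambda>f. ev f [d1+1, d2+1, d3+1, d4+1]) forms24)) / (2^15*3^7*5^4*7^2*11)"
  unfolding list24 F_def Let_def prod.case
  by (simp only: prod_list.Cons prod_list.Nil list.map of_int_mult of_int_add of_int_diff of_int_numeral
     mult_1_right mult.assoc)

lemma F_zero13: "F (d0, d1, d2, d1, d4) = 0"
  by (simp only: F_def Let_def prod.case diff_self mult_zero_right mult_zero_left div_0)
lemma F_zero14: "F (d0, d1, d2, d3, d1) = 0"
  by (simp only: F_def Let_def prod.case diff_self mult_zero_right mult_zero_left div_0)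
lemma F_zero34: "F (d0, d1, d2, d3, d3) = 0"
  by (simp only: F_def Let_def prod.case diff_self mult_zero_right mult_zero_left div_0)

lemma F_zero:
  assumes "d1 = d3 \<or> d1 = d4 \<or> d3 = d4"
  shows "F (d0, d1, d2, d3, d4) = 0"
  using assms F_zero13 F_zero14 F_zero34 by (elim disjE) simp_all

lemma nontriv:
  assumes "g \<in> {K1, K2, K3}" "ev g [d1+1, d2+1, d3+1, d4+1] = int k + 12"
  shows "\<exists>z::int. F (d0, d1, d2, d3, d4) = of_int ((int (k + 12) div gcd (int (k + 12)) 27720) * z)"
proof -
  define x where "x = [d1+1, d2+1, d3+1, d4+1]"
  have lx: "length x = 4" by (simp add: x_def)
  have gin: "g \<in> set forms24" using assms(1) by (auto simp: forms24_def K1_def K2_def K3_def)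
  define R where "R = prod_list (map (\<lambda>f. ev f x) (remove1 g forms24))"
  have G: "prod_list (map (\<lambda>f. ev f x) forms24) = int (k + 12) * R"
    unfolding R_def prod_list_map_remove1'[OF gin] using assms(2) by (simp add: x_def)
  have A: "(2^15*3^7*5^4*7^2*11) dvd int (k + 12) * R" using divA[OF lx] G by simp
  have B: "(2^12*3^5*5^3*7) dvd R" unfolding R_def by (rule divB[OF lx assms(1)])
  obtain z where "(of_int (int (k + 12) * R) / (2^15*3^7*5^4*7^2*11) :: rat) =
     of_int ((int (k + 12) div gcd (int (k + 12)) 27720) * z)"
    using core[OF _ A B] by auto
  moreover have "F (d0, d1, d2, d3, d4) = of_int (int (k + 12) * R) / (2^15*3^7*5^4*7^2*11)"
    unfolding F_eq G[unfolded x_def] ..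
  ultimately show ?thesis by auto
qed

lemma pa: "perm_act (transpose 3 4) (d0, d1, d2, d3, d4) = (d0,d1,d2,d4,d3)"
  "perm_act (transpose 1 3) (d0, d1, d2, d3, d4) = (d0,d3,d2,d1,d4)"
  "perm_act (transpose 1 4) (d0, d1, d2, d3, d4) = (d0,d4,d2,d3,d1)"
  by (simp_all add: perm_act_def dcomp_def transpose_def)

lemma Jv: "id (d0, d1, d2, d3, d4) = (d0, d1, d2, d3, d4)"
  "J_nu (d0, d1, d2, d3, d4) = (d1, d0, d2, d4, d3)" "J_s (d0, d1, d2, d3, d4) = (d4, d3, d2, d1, d0)"
  "(J_nu o J_s) (d0, d1, d2, d3, d4) = (d3, d4, d2, d0, d1)"
  by (simp_all add: J_nu_def J_s_def)

lemma cases_H: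
  fixes d0 d1 d2 d3 d4 :: int
  assumes "perm_act t (d0, d1, d2, d3, d4) = J (d0, d1, d2, d3, d4)"
    "t = transpose 1 3 \<or> t = transpose 1 4 \<or> t = transpose 3 4"
    "J = id \<or> J = J_nu \<or> J = J_s \<or> J = J_nu \<circ> J_s"
  shows "(d1 = d3 \<or> d1 = d4 \<or> d3 = d4) \<or> d0 = d1 \<or> d0 = d4 \<or> d0 = d3"
proof -
  have c1: "(d1 = d3 \<or> d1 = d4 \<or> d3 = d4) \<or> d0 = d1 \<or> d0 = d4 \<or> d0 = d3" if "t = transpose 1 3" "J = id"
    using assms(1) unfolding that pa Jv prod.inject by linarith
  have c2: "(d1 = d3 \<or> d1 = d4 \<or> d3 = d4) \<or> d0 = d1 \<or> d0 = d4 \<or> d0 = d3" if "t = transpose 1 3" "J = J_nu"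
    using assms(1) unfolding that pa Jv prod.inject by linarith
  have c3: "(d1 = d3 \<or> d1 = d4 \<or> d3 = d4) \<or> d0 = d1 \<or> d0 = d4 \<or> d0 = d3" if "t = transpose 1 3" "J = J_s"
    using assms(1) unfolding that pa Jv prod.inject by linarith
  have c4: "(d1 = d3 \<or> d1 = d4 \<or> d3 = d4) \<or> d0 = d1 \<or> d0 = d4 \<or> d0 = d3" if "t = transpose 1 3" "J = J_nu \<circ> J_s"
    using assms(1) unfolding that pa Jv prod.inject by linarith
  have c5: "(d1 = d3 \<or> d1 = d4 \<or> d3 = d4) \<or> d0 = d1 \<or> d0 = d4 \<or> d0 = d3" if "t = transpose 1 4" "J = id"
    using assms(1) unfolding that pa Jv prod.inject by linarith
  have c6: "(d1 = d3 \<or> d1 = d4 \<or> d3 = d4) \<or> d0 = d1 \<or> d0 = d4 \<or> d0 = d3" if "t = transpose 1 4" "J = J_nu"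
    using assms(1) unfolding that pa Jv prod.inject by linarith
  have c7: "(d1 = d3 \<or> d1 = d4 \<or> d3 = d4) \<or> d0 = d1 \<or> d0 = d4 \<or> d0 = d3" if "t = transpose 1 4" "J = J_s"
    using assms(1) unfolding that pa Jv prod.inject by linarith
  have c8: "(d1 = d3 \<or> d1 = d4 \<or> d3 = d4) \<or> d0 = d1 \<or> d0 = d4 \<or> d0 = d3" if "t = transpose 1 4" "J = J_nu \<circ> J_s"
    using assms(1) unfolding that pa Jv prod.inject by linarith
  have c9: "(d1 = d3 \<or> d1 = d4 \<or> d3 = d4) \<or> d0 = d1 \<or> d0 = d4 \<or> d0 = d3" if "t = transpose 3 4" "J = id"
    using assms(1) unfolding that pa Jv prod.inject by linarith
  have c10: "(d1 = d3 \<or> d1 = d4 \<or> d3 = d4) \<or> d0 = d1 \<or> d0 = d4 \<or> d0 = d3" if "t = transpose 3 4" "J = J_nu"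
    using assms(1) unfolding that pa Jv prod.inject by linarith
  have c11: "(d1 = d3 \<or> d1 = d4 \<or> d3 = d4) \<or> d0 = d1 \<or> d0 = d4 \<or> d0 = d3" if "t = transpose 3 4" "J = J_s"
    using assms(1) unfolding that pa Jv prod.inject by linarith
  have c12: "(d1 = d3 \<or> d1 = d4 \<or> d3 = d4) \<or> d0 = d1 \<or> d0 = d4 \<or> d0 = d3" if "t = transpose 3 4" "J = J_nu \<circ> J_s"
    using assms(1) unfolding that pa Jv prod.inject by linarith
  consider (t1) "t = transpose 1 3" | (t2) "t = transpose 1 4" | (t3) "t = transpose 3 4" using assms(2) by argo
  then show ?thesis
  proof cases
    case t1
    consider (j1) "J = id" | (j2) "J = J_nu" | (j3) "J = J_s" | (j4) "J = J_nu \<circ> J_s" using assms(3) by argo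
    then show ?thesis
    proof cases
      case j1 show ?thesis by (rule c1[OF t1 j1])
    next
      case j2 show ?thesis by (rule c2[OF t1 j2])
    next
      case j3 show ?thesis by (rule c3[OF t1 j3])
    next
      case j4 show ?thesis by (rule c4[OF t1 j4])
    qed
  next
    case t2
    consider (j1) "J = id" | (j2) "J = J_nu" | (j3) "J = J_s" | (j4) "J = J_nu \<circ> J_s" using assms(3) by argo
    then show ?thesis
    proof cases
      case j1 show ?thesis by (rule c5[OF t2 j1])
    next
      case j2 show ?thesis by (rule c6[OF t2 j2])
    next
      case j3 show ?thesis by (rule c7[OF t2 j3])
    next
      case j4 show ?thesis by (rule c8[OF t2 j4])
    qed
  next
    case t3
    consider (j1) "J = id" | (j2) "J = J_nu" | (j3) "J = J_s" | (j4) "J = J_nu \<circ> J_s" using assms(3) by argo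
    then show ?thesis
    proof cases
      case j1 show ?thesis by (rule c9[OF t3 j1])
    next
      case j2 show ?thesis by (rule c10[OF t3 j2])
    next
      case j3 show ?thesis by (rule c11[OF t3 j3])
    next
      case j4 show ?thesis by (rule c12[OF t3 j4])
    qed
  qed
qed

theorem theorem6:
  fixes k :: nat and d0 d1 d2 d3 d4 :: int and a b :: nat and J :: "dvec \<Rightarrow> dvec"
  assumes "d0 + d1 + 2*d2 + d3 + d4 = int k + 6"
    and "a \<in> {1,3,4}" and "b \<in> {1,3,4}" and "a \<noteq> b"
    and "J \<in> {id, J_nu, J_s, J_nu \<circ> J_s}"
    and "perm_act (transpose a b) (d0, d1, d2, d3, d4) = J (d0, d1, d2, d3, d4)"
  shows "\<exists>z::int. F (d0, d1, d2, d3, d4)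
           = of_int ((int (k + 12) div gcd (int (k + 12)) 27720) * z)"
proof -
  have T: "transpose a b = transpose 1 3 \<or> transpose a b = transpose 1 4 \<or> transpose a b = transpose 3 4"
    using assms(2-4) by (auto simp: transpose_commute)
  have Jc: "J = id \<or> J = J_nu \<or> J = J_s \<or> J = J_nu \<circ> J_s" using assms(5) by auto
  have H: "(d1 = d3 \<or> d1 = d4 \<or> d3 = d4) \<or> d0 = d1 \<or> d0 = d4 \<or> d0 = d3"
    by (rule cases_H[OF assms(6) T Jc])
  show ?thesis
  proof (cases "d1 = d3 \<or> d1 = d4 \<or> d3 = d4")
    case True
    then show ?thesis using F_zero by (intro exI[of _ 0]) simp
  next
    case False
    then have "d0 = d1 \<or> d0 = d4 \<or> d0 = d3" using H by blast
    then show ?thesis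
    proof (elim disjE)
      assume "d0 = d1"
      then show ?thesis using assms(1) by (intro nontriv[of K1]) (simp_all add: K1_def ev_def)
    next
      assume "d0 = d4"
      then show ?thesis using assms(1) by (intro nontriv[of K2]) (simp_all add: K2_def ev_def)
    next
      assume "d0 = d3"
      then show ?thesis using assms(1) by (intro nontriv[of K3]) (simp_all add: K3_def ev_def)
    qed
  qed
qed

end
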